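(* Let $c\in\mathbb{C}$ and $n\geq 1$. Then the automorphism group of the vertex operator algebra $\mathcal{V}_c^{\otimes n}$ is the symmetric group $S_n$, acting by permutation of tensor factors: $$\mathrm{Aut}\,\mathcal{V}_c^{\otimes n}=S_n .$$
   Context: $\mathcal{V}_c$ denotes the universal Virasoro vertex operator algebra of central charge $c$, generated by a weight-2 vector $\omega$ whose field $L(z)=Y(\omega,z)=\sum_{n\in\mathbb{Z}}L(n)z^{-n-2}$ satisfies $[L(m),L(n)]=(m-n)L(m+n)+\frac{c}{12}(m^3-m)\delta_{m+n,0}$. In $\mathcal{V}_c^{\otimes n}$ write $\omega_i$ for the copy of $\omega$ in the $i$-th tensor factor, with modes $L_i(m)$; the conformal vector of $\mathcal{V}_c^{\otimes n}$ is $\omega_1+\cdots+\omega_n$. $S_n$ acts by $\sigma\cdot L_{i_1}(m_1)\cdots L_{i_k}(m_k)\mathbb{1}=L_{\sigma(i_1)}(m_1)\cdots L_{\sigma(i_k)}(m_k)\mathbb{1}$. *)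

theory Defs
  imports Complex_Main "HOL-Combinatorics.Permutations"
begin

text \<open>A vertex operator algebra over the complex numbers is rendered by its data:
  a complex vector space with addition from the type class and scalar multiplication sc,
  the products Y a m b = a_(m) b (so Y(a,z) = sum_m a_(m) z^(-m-1)), the vacuum vac and
  the conformal vector w.\<close>

text \<open>Finite sum over the support of a function on nat (all sums below have finite support).\<close>
definition fsum :: "(nat \<Rightarrow> 'v::ab_group_add) \<Rightarrow> 'v" where
  "fsum f = sum f {i. f i \<noteq> 0}"

definition sgn_pow :: "int \<Rightarrow> complex" where
  "sgn_pow k = (if even k then 1 else -1)"

definition Lmode :: "('v \<Rightarrow> int \<Rightarrow> 'v \<Rightarrow> 'v) \<Rightarrow> 'v \<Rightarrow> int \<Rightarrow> 'v \<Rightarrow> 'v" where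
  "Lmode Y w m = Y w (m + 1)"

definition L0_eigenspace ::
  "(complex \<Rightarrow> 'v::ab_group_add \<Rightarrow> 'v) \<Rightarrow> ('v \<Rightarrow> int \<Rightarrow> 'v \<Rightarrow> 'v) \<Rightarrow> 'v \<Rightarrow> int \<Rightarrow> 'v set" where
  "L0_eigenspace sc Y w k = {v. Lmode Y w 0 v = sc (of_int k) v}"

text \<open>Vertex operator algebra axioms (Frenkel--Lepowsky--Meurman), central charge cv.\<close>
definition is_VOA ::
  "(complex \<Rightarrow> 'v::ab_group_add \<Rightarrow> 'v) \<Rightarrow> ('v \<Rightarrow> int \<Rightarrow> 'v \<Rightarrow> 'v) \<Rightarrow> 'v \<Rightarrow> 'v \<Rightarrow> complex \<Rightarrow> bool" where
  "is_VOA sc Y vac w cv \<longleftrightarrow>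
     vector_space sc
   \<and> (\<forall>a m. Vector_Spaces.linear sc sc (Y a m))
   \<and> (\<forall>m b. Vector_Spaces.linear sc sc (\<lambda>a. Y a m b))
   \<and> (\<forall>a b. \<exists>N. \<forall>m\<ge>N. Y a m b = 0)
   \<and> (\<forall>m b. Y vac m b = (if m = -1 then b else 0))
   \<and> (\<forall>a. Y a (-1) vac = a \<and> (\<forall>m\<ge>0. Y a m vac = 0))
   \<and> (\<forall>a b u p q r.
        fsum (\<lambda>i. sc ((of_int p) gchoose i) (Y (Y a (r + int i) b) (p + q - int i) u))
      = fsum (\<lambda>i. sc (sgn_pow (int i) * ((of_int r) gchoose i)) (Y a (p + r - int i) (Y b (q + int i) u)))
      - fsum (\<lambda>i. sc (sgn_pow (r + int i) * ((of_int r) gchoose i)) (Y b (q + r - int i) (Y a (p + int i) u))))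
   \<and> (\<forall>m k v. Lmode Y w m (Lmode Y w k v) - Lmode Y w k (Lmode Y w m v)
        = sc (of_int (m - k)) (Lmode Y w (m + k) v)
          + (if m + k = 0 then sc (cv / 12 * of_int (m^3 - m)) v else 0))
   \<and> (\<forall>a m b. Y (Lmode Y w (-1) a) m b = sc (- of_int m) (Y a (m - 1) b))
   \<and> module.span sc (\<Union>k. L0_eigenspace sc Y w k) = UNIV
   \<and> (\<forall>k. \<exists>B. finite B \<and> B \<subseteq> L0_eigenspace sc Y w k
            \<and> L0_eigenspace sc Y w k \<subseteq> module.span sc B)
   \<and> (\<exists>N. \<forall>k<N. L0_eigenspace sc Y w k = {0})"

definition VOA_aut ::
  "(complex \<Rightarrow> 'v::ab_group_add \<Rightarrow> 'v) \<Rightarrow> ('v \<Rightarrow> int \<Rightarrow> 'v \<Rightarrow> 'v) \<Rightarrow> 'v \<Rightarrow> ('v \<Rightarrow> 'v) \<Rightarrow> bool" where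
  "VOA_aut sc Y w g \<longleftrightarrow> Vector_Spaces.linear sc sc g \<and> bij g
     \<and> (\<forall>a m b. g (Y a m b) = Y (g a) m (g b)) \<and> g w = w"

text \<open>Word of modes applied to the vacuum: wapp om [(i1,m1),...,(ik,mk)] =
  L_{i1}(m1) ... L_{ik}(mk) vac, where L_i(m) = (om i)_(m+1).\<close>
fun wapp :: "('v \<Rightarrow> int \<Rightarrow> 'v \<Rightarrow> 'v) \<Rightarrow> 'v \<Rightarrow> (nat \<Rightarrow> 'v) \<Rightarrow> (nat \<times> int) list \<Rightarrow> 'v" where
  "wapp Y vac om [] = vac"
| "wapp Y vac om ((i, m) # xs) = Y (om i) (m + 1) (wapp Y vac om xs)"

definition pbw_le :: "nat \<times> int \<Rightarrow> nat \<times> int \<Rightarrow> bool" where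
  "pbw_le x y \<longleftrightarrow> fst x < fst y \<or> (fst x = fst y \<and> snd x \<le> snd y)"

definition pbw_words :: "nat \<Rightarrow> (nat \<times> int) list set" where
  "pbw_words n = {xs. set xs \<subseteq> {1..n} \<times> {..-2} \<and> sorted_wrt pbw_le xs}"

text \<open>(V, Y, vac, om) is the universal Virasoro VOA tensor power V_c^{\<otimes> n}:
  a VOA with conformal vector om 1 + ... + om n, where the om i have commuting Virasoro
  modes of central charge c and the ordered PBW monomials form a basis.  This determines
  V_c^{\<otimes> n} up to isomorphism (with om i the i-th tensor copy of omega).\<close>
definition is_Vir_tensor_power ::
  "complex \<Rightarrow> nat \<Rightarrow> (complex \<Rightarrow> 'v::ab_group_add \<Rightarrow> 'v) \<Rightarrow> ('v \<Rightarrow> int \<Rightarrow> 'v \<Rightarrow> 'v) \<Rightarrow> 'v \<Rightarrow> (nat \<Rightarrow> 'v) \<Rightarrow> bool" where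
  "is_Vir_tensor_power c n sc Y vac om \<longleftrightarrow>
     is_VOA sc Y vac (\<Sum>i=1..n. om i) (of_nat n * c)
   \<and> (\<forall>i\<in>{1..n}. \<forall>j\<in>{1..n}. \<forall>m k v.
        Lmode Y (om i) m (Lmode Y (om j) k v) - Lmode Y (om j) k (Lmode Y (om i) m v)
        = (if i = j then sc (of_int (m - k)) (Lmode Y (om i) (m + k) v)
             + (if m + k = 0 then sc (c / 12 * of_int (m^3 - m)) v else 0)
           else 0))
   \<and> inj_on (wapp Y vac om) (pbw_words n)
   \<and> \<not> module.dependent sc (wapp Y vac om ` pbw_words n)
   \<and> module.span sc (wapp Y vac om ` pbw_words n) = UNIV"

definition perm_act ::
  "nat \<Rightarrow> (complex \<Rightarrow> 'v::ab_group_add \<Rightarrow> 'v) \<Rightarrow> ('v \<Rightarrow> int \<Rightarrow> 'v \<Rightarrow> 'v) \<Rightarrow> 'v \<Rightarrow> (nat \<Rightarrow> 'v)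
     \<Rightarrow> (nat \<Rightarrow> nat) \<Rightarrow> 'v \<Rightarrow> 'v" where
  "perm_act n sc Y vac om \<sigma> = (THE g. Vector_Spaces.linear sc sc g \<and>
     (\<forall>xs. set (map fst xs) \<subseteq> {1..n} \<longrightarrow>
        g (wapp Y vac om xs) = wapp Y vac om (map (\<lambda>(i, m). (\<sigma> i, m)) xs)))"

end

theory Submission
  imports Defs "HOL-Library.Product_Lexorder"
begin


definition rl :: "(nat \<Rightarrow> nat) \<Rightarrow> (nat \<times> int) list \<Rightarrow> (nat \<times> int) list" where
  "rl \<sigma> xs = map (\<lambda>(i,m). (\<sigma> i, m)) xs"

lemma rl_simps[simp]: "rl \<sigma> [] = []" "rl \<sigma> ((i,m)#xs) = (\<sigma> i, m) # rl \<sigma> xs"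
  "rl \<sigma> (xs @ ys) = rl \<sigma> xs @ rl \<sigma> ys"
  by (auto simp: rl_def)

lemma rl_comp: "rl \<sigma> (rl \<tau> xs) = rl (\<sigma> \<circ> \<tau>) xs"
  by (induction xs) auto

lemma rl_id: "rl id xs = xs"
  by (induction xs) auto

lemma rl_fst: "map fst (rl \<sigma> xs) = map \<sigma> (map fst xs)"
  by (induction xs) auto

definition key :: "nat \<times> int \<Rightarrow> nat \<times> nat \<times> int" where
  "key x = (if snd x \<ge> -1 then 1 else 0, fst x, snd x)"

fun invc :: "(nat \<times> int) list \<Rightarrow> nat" where
  "invc [] = 0"
| "invc (x # xs) = length (filter (\<lambda>y. key y < key x) xs) + invc xs"

lemma invc_swap: "key y < key x \<Longrightarrow> invc (as @ y # x # bs) < invc (as @ x # y # bs)"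
proof (induction as)
  case Nil
  then show ?case by auto
next
  case (Cons a as)
  then show ?case by auto
qed

lemma unsorted_split: "\<not> sorted (map key xs) \<Longrightarrow> \<exists>as x y bs. xs = as @ x # y # bs \<and> key y < key x"
proof (induction xs)
  case Nil
  then show ?case by simp
next
  case (Cons a xs)
  note IH = Cons.IH and pr = Cons.prems
  show ?case
  proof (cases xs)
    case Nil
    then show ?thesis using pr by simp
  next
    case (Cons b xs')
    show ?thesis
    proof (cases "key b < key a")
      case True
      have "a # xs = [] @ a # b # xs' \<and> key b < key a" using Cons True by simp
      then show ?thesis by blast
    next
      case False
      have "sorted (map key (a # xs))" if "sorted (map key xs)"
        using that False unfolding Cons list.map sorted2 by (simp add: not_less)
      then have "\<not> sorted (map key xs)" using pr by blast
      then obtain as x y bs where h: "xs = as @ x # y # bs" "key y < key x" using IH by blast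
      then have "a # xs = (a # as) @ x # y # bs \<and> key y < key x" by simp
      then show ?thesis by blast
    qed
  qed
qed

lemma sorted_last: "sorted (map key xs) \<Longrightarrow> x \<in> set xs \<Longrightarrow> key x \<le> key (last xs)"
proof -
  assume s: "sorted (map key xs)" and x: "x \<in> set xs"
  then have ne: "xs \<noteq> []" by auto
  have xs: "xs = butlast xs @ [last xs]" using ne by simp
  have sw: "sorted_wrt (\<lambda>a b. key a \<le> key b) xs" using s by (simp add: sorted_wrt_map)
  show ?thesis
  proof (cases "x = last xs")
    case True then show ?thesis by simp
  next
    case False
    then have xb: "x \<in> set (butlast xs)" using x xs by (metis Un_iff empty_iff empty_set set_ConsD set_append)
    have "sorted_wrt (\<lambda>a b. key a \<le> key b) (butlast xs @ [last xs])" using sw xs by simp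
    then show ?thesis using xb unfolding sorted_wrt_append by simp
  qed
qed

lemma sorted_pbw:
  assumes s: "sorted (map key xs)" and ok: "set (map fst xs) \<subseteq> {1..n}" and ne: "xs \<noteq> []"
    and l: "snd (last xs) \<le> -2"
  shows "xs \<in> pbw_words n"
proof -
  have md: "snd x \<le> -2" if "x \<in> set xs" for x
  proof -
    have "key x \<le> key (last xs)" using sorted_last[OF s that] .
    then show ?thesis using l unfolding key_def by (auto split: if_splits simp: less_eq_prod_simp)
  qed
  have "set xs \<subseteq> {1..n} \<times> {..-2}" using md ok by force
  moreover have "sorted_wrt pbw_le xs"
  proof -
    have "sorted_wrt (\<lambda>a b. key a \<le> key b) xs" using s by (simp add: sorted_wrt_map)
    then show ?thesis
    proof (rule sorted_wrt_mono_rel[rotated])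
      fix a b assume "a \<in> set xs" "b \<in> set xs" "key a \<le> key b"
      moreover obtain i1 m1 where a: "a = (i1,m1)" by fastforce
      moreover obtain i2 m2 where b: "b = (i2,m2)" by fastforce
      ultimately show "pbw_le a b" using md[of a] md[of b]
        by (auto simp: key_def pbw_le_def less_eq_prod_simp)
    qed
  qed
  ultimately show ?thesis unfolding pbw_words_def by blast
qed



locale VT =
  fixes c :: complex and n :: nat and sc :: "complex \<Rightarrow> 'v::ab_group_add \<Rightarrow> 'v"
    and Y :: "'v \<Rightarrow> int \<Rightarrow> 'v \<Rightarrow> 'v" and vac :: 'v and om :: "nat \<Rightarrow> 'v"
  assumes VT: "is_Vir_tensor_power c n sc Y vac om"
begin

lemma VOA: "is_VOA sc Y vac (\<Sum>i=1..n. om i) (of_nat n * c)"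
  using VT unfolding is_Vir_tensor_power_def by (elim conjE) blast

lemma vsp: "vector_space sc" using VOA unfolding is_VOA_def by (elim conjE) blast

sublocale vs: vector_space sc by (rule vsp)
sublocale vp: vector_space_pair sc sc by unfold_locales

lemma linY: "Vector_Spaces.linear sc sc (Y a m)" using VOA unfolding is_VOA_def by (elim conjE) blast
lemma linY1: "Vector_Spaces.linear sc sc (\<lambda>a. Y a m b)" using VOA unfolding is_VOA_def by (elim conjE) blast
lemma Yvac: "Y vac m b = (if m = -1 then b else 0)" using VOA unfolding is_VOA_def by (elim conjE) blast
lemma Ycreate: "m \<ge> 0 \<Longrightarrow> Y a m vac = 0" using VOA unfolding is_VOA_def by (elim conjE) blast
lemma Ycreate1: "Y a (-1) vac = a" using VOA unfolding is_VOA_def by (elim conjE) blast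
lemma borch: "fsum (\<lambda>i. sc ((of_int p) gchoose i) (Y (Y a (r + int i) b) (p + q - int i) u))
      = fsum (\<lambda>i. sc (sgn_pow (int i) * ((of_int r) gchoose i)) (Y a (p + r - int i) (Y b (q + int i) u)))
      - fsum (\<lambda>i. sc (sgn_pow (r + int i) * ((of_int r) gchoose i)) (Y b (q + r - int i) (Y a (p + int i) u)))"
  using VOA unfolding is_VOA_def by (elim conjE) blast
lemma comm: "i\<in>{1..n} \<Longrightarrow> j\<in>{1..n} \<Longrightarrow>
        Y (om i) (m+1) (Y (om j) (k+1) v) - Y (om j) (k+1) (Y (om i) (m+1) v)
        = (if i = j then sc (of_int (m - k)) (Y (om i) (m + k+1) v)
             + (if m + k = 0 then sc (c / 12 * of_int (m^3 - m)) v else 0)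
           else 0)"
  using VT unfolding is_Vir_tensor_power_def Lmode_def by (auto simp: add.assoc)
lemma pbw_inj: "inj_on (wapp Y vac om) (pbw_words n)"
  using VT unfolding is_Vir_tensor_power_def by (elim conjE) blast
lemma pbw_indep: "vs.independent (wapp Y vac om ` pbw_words n)"
  using VT unfolding is_Vir_tensor_power_def by (elim conjE) blast
lemma pbw_span: "vs.span (wapp Y vac om ` pbw_words n) = UNIV"
  using VT unfolding is_Vir_tensor_power_def by (elim conjE) blast

lemma Y0[simp]: "Y a m 0 = 0" using linY[of a m] by (rule vp.linear_0)
lemma Yadd: "Y a m (x + y) = Y a m x + Y a m y" using linY[of a m] by (rule vp.linear_add)
lemma Ydiff: "Y a m (x - y) = Y a m x - Y a m y" using linY[of a m] by (rule vp.linear_diff)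
lemma Yscale: "Y a m (sc k x) = sc k (Y a m x)" using linY[of a m] by (rule vp.linear_scale)

definition ops :: "(nat \<times> int) list \<Rightarrow> 'v \<Rightarrow> 'v" where
  "ops xs v = foldr (\<lambda>(i,m) v. Y (om i) (m+1) v) xs v"

lemma ops_simps[simp]: "ops [] v = v" "ops ((i,m)#xs) v = Y (om i) (m+1) (ops xs v)"
  "ops (xs @ ys) v = ops xs (ops ys v)"
  by (auto simp: ops_def)

lemma wapp_ops: "wapp Y vac om xs = ops xs vac"
  by (induction xs) auto

lemma ops_0[simp]: "ops xs 0 = 0"
  by (induction xs) auto
lemma ops_add: "ops xs (x + y) = ops xs x + ops xs y"
  by (induction xs) (auto simp: Yadd)
lemma ops_scale: "ops xs (sc k x) = sc k (ops xs x)"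
  by (induction xs) (auto simp: Yscale)
lemma ops_diff: "ops xs (x - y) = ops xs x - ops xs y"
  by (induction xs) (auto simp: Ydiff)

lemma wapp_swap:
  assumes "i \<in> {1..n}" "j \<in> {1..n}"
  shows "wapp Y vac om (as @ (i,m) # (j,k) # bs) = wapp Y vac om (as @ (j,k) # (i,m) # bs)
    + (if i = j then sc (of_int (m - k)) (wapp Y vac om (as @ (i, m+k) # bs))
         + (if m + k = 0 then sc (c / 12 * of_int (m^3 - m)) (wapp Y vac om (as @ bs)) else 0)
       else 0)"
proof -
  have e: "Y (om i) (m+1) (Y (om j) (k+1) v) = Y (om j) (k+1) (Y (om i) (m+1) v) +
     (if i = j then sc (of_int (m - k)) (Y (om i) (m + k+1) v)
             + (if m + k = 0 then sc (c / 12 * of_int (m^3 - m)) v else 0)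
           else 0)" for v
    using comm[OF assms, of m k v] by (simp add: algebra_simps)
  show ?thesis unfolding wapp_ops using e
    by (auto simp: ops_add ops_scale)
qed

lemma wapp_last_zero: "m \<ge> -1 \<Longrightarrow> wapp Y vac om (as @ [(i,m)]) = 0"
  unfolding wapp_ops by (simp add: Ycreate)

lemma straighten:
  assumes \<sigma>: "\<sigma> permutes {1..n}" and lin: "Vector_Spaces.linear sc sc \<phi>"
    and base: "\<And>b. b \<in> pbw_words n \<Longrightarrow> \<phi> (wapp Y vac om b) = wapp Y vac om (rl \<sigma> b)"
  shows "set (map fst xs) \<subseteq> {1..n} \<Longrightarrow> \<phi> (wapp Y vac om xs) = wapp Y vac om (rl \<sigma> xs)"
proof -
  have padd: "\<phi> (x + y) = \<phi> x + \<phi> y" for x y using lin by (rule vp.linear_add)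
  have pscale: "\<phi> (sc k x) = sc k (\<phi> x)" for k x using lin by (rule vp.linear_scale)
  have p0: "\<phi> 0 = 0" using lin by (rule vp.linear_0)
  have sig: "\<sigma> i \<in> {1..n}" if "i \<in> {1..n}" for i using permutes_in_image[OF \<sigma>] that by blast
  have siginj: "\<sigma> i = \<sigma> j \<longleftrightarrow> i = j" for i j using \<sigma> by (metis permutes_inj injD)
  have "\<forall>xs. set (map fst xs) \<subseteq> {1..n} \<longrightarrow> (length xs, invc xs) = p \<longrightarrow>
      \<phi> (wapp Y vac om xs) = wapp Y vac om (rl \<sigma> xs)" for p
  proof (induction p rule: wf_induct[OF wf_lex_prod[OF wf_less_than wf_less_than]])
    case (1 p)
    show ?case
    proof (intro allI impI)
      fix xs assume ok: "set (map fst xs) \<subseteq> {1..n}" and p: "(length xs, invc xs) = p"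
      have IH: "\<phi> (wapp Y vac om ys) = wapp Y vac om (rl \<sigma> ys)"
        if "set (map fst ys) \<subseteq> {1..n}" "length ys < length xs \<or> (length ys = length xs \<and> invc ys < invc xs)" for ys
        using 1[rule_format, of "(length ys, invc ys)" ys] that p by auto
      show "\<phi> (wapp Y vac om xs) = wapp Y vac om (rl \<sigma> xs)"
      proof (cases "sorted (map key xs)")
        case False
        then obtain as x y bs where xs: "xs = as @ x # y # bs" and k: "key y < key x"
          using unsorted_split by blast
        obtain i m where x: "x = (i,m)" by (cases x)
        obtain j k where y: "y = (j,k)" by (cases y)
        have ij: "i \<in> {1..n}" "j \<in> {1..n}" using ok xs x y by auto
        have okas: "set (map fst as) \<subseteq> {1..n}" "set (map fst bs) \<subseteq> {1..n}" using ok xs by auto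
        have I1: "\<phi> (wapp Y vac om (as @ (j,k) # (i,m) # bs)) = wapp Y vac om (rl \<sigma> (as @ (j,k) # (i,m) # bs))"
          apply (rule IH) using okas ij invc_swap[OF k, of as bs] xs x y by auto
        have I2: "\<phi> (wapp Y vac om (as @ (i,m+k) # bs)) = wapp Y vac om (rl \<sigma> (as @ (i,m+k) # bs))"
          apply (rule IH) using okas ij xs by auto
        have I3: "\<phi> (wapp Y vac om (as @ bs)) = wapp Y vac om (rl \<sigma> (as @ bs))"
          apply (rule IH) using okas ij xs by auto
        have "\<phi> (wapp Y vac om xs) = \<phi> (wapp Y vac om (as @ (j,k) # (i,m) # bs))
    + (if i = j then sc (of_int (m - k)) (\<phi> (wapp Y vac om (as @ (i, m+k) # bs)))
         + (if m + k = 0 then sc (c / 12 * of_int (m^3 - m)) (\<phi> (wapp Y vac om (as @ bs))) else 0)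
       else 0)"
          unfolding xs x y wapp_swap[OF ij] by (auto simp: padd pscale p0)
        also have "\<dots> = wapp Y vac om (rl \<sigma> (as @ (j,k) # (i,m) # bs))
    + (if \<sigma> i = \<sigma> j then sc (of_int (m - k)) (wapp Y vac om (rl \<sigma> (as @ (i, m+k) # bs)))
         + (if m + k = 0 then sc (c / 12 * of_int (m^3 - m)) (wapp Y vac om (rl \<sigma> (as @ bs))) else 0)
       else 0)"
          unfolding I1 I2 I3 siginj ..
        also have "\<dots> = wapp Y vac om (rl \<sigma> xs)"
          unfolding xs x y using wapp_swap[OF sig[OF ij(1)] sig[OF ij(2)], of "rl \<sigma> as" m k "rl \<sigma> bs"]
          by simp
        finally show ?thesis .
      next
        case True
        show ?thesis
        proof (cases "xs = []")
          case True
          have "[] \<in> pbw_words n" by (simp add: pbw_words_def)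
          then show ?thesis using base[of "[]"] True by simp
        next
          case False
          obtain as i m where xs: "xs = as @ [(i,m)]" using False
            by (metis rev_exhaust surj_pair)
          show ?thesis
          proof (cases "m \<ge> -1")
            case True
            then show ?thesis unfolding xs using wapp_last_zero[OF True] p0 by simp
          next
            case F: False
            have "xs \<in> pbw_words n" using sorted_pbw[OF \<open>sorted _\<close> ok False] F xs by simp
            then show ?thesis by (rule base)
          qed
        qed
      qed
    qed
  qed
  then show "set (map fst xs) \<subseteq> {1..n} \<Longrightarrow> \<phi> (wapp Y vac om xs) = wapp Y vac om (rl \<sigma> xs)"
    by blast
qed

end



context VT begin

abbreviation W where "W \<equiv> wapp Y vac om"
abbreviation okw :: "(nat \<times> int) list \<Rightarrow> bool" where "okw xs \<equiv> set (map fst xs) \<subseteq> {1..n}"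

definition phi :: "(nat \<Rightarrow> nat) \<Rightarrow> 'v \<Rightarrow> 'v" where
  "phi \<sigma> = vp.construct (W ` pbw_words n) (\<lambda>v. W (rl \<sigma> (inv_into (pbw_words n) W v)))"

lemma phi_lin: "Vector_Spaces.linear sc sc (phi \<sigma>)"
  unfolding phi_def by (rule vp.linear_construct[OF pbw_indep])

lemma phi_base: "b \<in> pbw_words n \<Longrightarrow> phi \<sigma> (W b) = W (rl \<sigma> b)"
  unfolding phi_def
  by (subst vp.construct_basis[OF pbw_indep]) (auto simp: inv_into_f_f[OF pbw_inj])

lemma phi_word: "\<sigma> permutes {1..n} \<Longrightarrow> okw xs \<Longrightarrow> phi \<sigma> (W xs) = W (rl \<sigma> xs)"
  by (rule straighten[OF _ phi_lin phi_base])

lemma pbw_okw: "xs \<in> pbw_words n \<Longrightarrow> okw xs"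
  unfolding pbw_words_def by auto

lemma eq_on_words:
  assumes g: "Vector_Spaces.linear sc sc g" and h: "Vector_Spaces.linear sc sc h"
    and eq: "\<And>xs. okw xs \<Longrightarrow> g (W xs) = h (W xs)"
  shows "g = h"
proof
  fix x
  have "x \<in> vs.span (W ` pbw_words n)" using pbw_span by simp
  then show "g x = h x"
  proof (rule vp.linear_eq_on[OF g h])
    fix b assume "b \<in> W ` pbw_words n"
    then obtain xs where "xs \<in> pbw_words n" "b = W xs" by blast
    then show "g b = h b" using eq pbw_okw by blast
  qed
qed

lemma okw_rl: "\<sigma> permutes {1..n} \<Longrightarrow> okw xs \<Longrightarrow> okw (rl \<sigma> xs)"
  unfolding rl_fst using permutes_in_image by fastforce

lemma perm_act_eq: "\<sigma> permutes {1..n} \<Longrightarrow> perm_act n sc Y vac om \<sigma> = phi \<sigma>"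
  unfolding perm_act_def
proof (rule the_equality)
  assume s: "\<sigma> permutes {1..n}"
  show "Vector_Spaces.linear sc sc (phi \<sigma>) \<and>
    (\<forall>xs. okw xs \<longrightarrow> phi \<sigma> (W xs) = W (map (\<lambda>(i, m). (\<sigma> i, m)) xs))"
    using phi_lin phi_word[OF s] by (simp add: rl_def)
  fix g assume "Vector_Spaces.linear sc sc g \<and>
    (\<forall>xs. okw xs \<longrightarrow> g (W xs) = W (map (\<lambda>(i, m). (\<sigma> i, m)) xs))"
  then show "g = phi \<sigma>"
    by (intro eq_on_words) (auto simp: phi_lin phi_word[OF s] rl_def)
qed

lemma phi_comp:
  assumes s: "\<sigma> permutes {1..n}" and t: "\<tau> permutes {1..n}"
  shows "phi (\<sigma> \<circ> \<tau>) = phi \<sigma> \<circ> phi \<tau>"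
proof (rule eq_on_words[OF phi_lin Vector_Spaces.linear_compose[OF phi_lin phi_lin]])
  fix xs assume ok: "okw xs"
  have ok2: "okw (rl \<tau> xs)" by (rule okw_rl[OF t ok])
  show "phi (\<sigma> \<circ> \<tau>) (W xs) = (phi \<sigma> \<circ> phi \<tau>) (W xs)"
    using phi_word[OF t ok] phi_word[OF s ok2] phi_word[OF permutes_compose[OF t s] ok]
    by (simp add: rl_comp)
qed

lemma phi_id: "phi id = id"
  apply (rule eq_on_words[OF phi_lin vs.linear_id])
  apply (simp add: phi_word permutes_id rl_id)
  done

lemma phi_bij: "\<sigma> permutes {1..n} \<Longrightarrow> bij (phi \<sigma>)"
proof -
  assume s: "\<sigma> permutes {1..n}"
  have si: "inv \<sigma> permutes {1..n}" using permutes_inv[OF s] .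
  have "phi \<sigma> \<circ> phi (inv \<sigma>) = id" using phi_comp[OF s si] permutes_inv_o[OF s] phi_id by simp
  moreover have "phi (inv \<sigma>) \<circ> phi \<sigma> = id" using phi_comp[OF si s] permutes_inv_o[OF s] phi_id by simp
  ultimately show ?thesis using o_bij by blast
qed

lemma phi_inter:
  assumes s: "\<sigma> permutes {1..n}" and i: "i \<in> {1..n}"
  shows "phi \<sigma> (Y (om i) m v) = Y (om (\<sigma> i)) m (phi \<sigma> v)"
proof -
  have "(\<lambda>v. phi \<sigma> (Y (om i) m v)) = (\<lambda>v. Y (om (\<sigma> i)) m (phi \<sigma> v))"
  proof (rule eq_on_words)
    show "Vector_Spaces.linear sc sc (\<lambda>v. phi \<sigma> (Y (om i) m v))"
      using Vector_Spaces.linear_compose[OF linY phi_lin] by (simp add: o_def)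
    show "Vector_Spaces.linear sc sc (\<lambda>v. Y (om (\<sigma> i)) m (phi \<sigma> v))"
      using Vector_Spaces.linear_compose[OF phi_lin linY] by (simp add: o_def)
    fix xs assume ok: "okw xs"
    have "Y (om i) m (W xs) = W ((i, m - 1) # xs)" by simp
    then have "phi \<sigma> (Y (om i) m (W xs)) = W (rl \<sigma> ((i, m - 1) # xs))"
      using phi_word[OF s, of "(i, m - 1) # xs"] ok i by simp
    also have "\<dots> = Y (om (\<sigma> i)) m (phi \<sigma> (W xs))" using phi_word[OF s ok] by simp
    finally show "phi \<sigma> (Y (om i) m (W xs)) = Y (om (\<sigma> i)) m (phi \<sigma> (W xs))" .
  qed
  then show ?thesis by meson
qed

lemma fsum_lin:
  assumes l: "Vector_Spaces.linear sc sc f" and inj: "inj f"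
  shows "f (fsum g) = fsum (\<lambda>i. f (g i))"
proof -
  have z: "f x = 0 \<longleftrightarrow> x = 0" for x using inj vp.linear_0[OF l] by (metis injD)
  show ?thesis unfolding fsum_def z by (rule vp.linear_sum[OF l])
qed

lemma fsum_single: "(\<And>t. t \<noteq> 0 \<Longrightarrow> f t = 0) \<Longrightarrow> fsum f = f 0"
proof -
  assume h: "\<And>t. t \<noteq> 0 \<Longrightarrow> f t = 0"
  have "{t. f t \<noteq> 0} \<subseteq> {0}" using h by blast
  then have "sum f {t. f t \<noteq> 0} = sum f {0}" by (intro sum.mono_neutral_left) auto
  then show ?thesis unfolding fsum_def by simp
qed

lemma borch0: "Y (Y a r b) q u =
     fsum (\<lambda>i. sc (sgn_pow (int i) * ((of_int r) gchoose i)) (Y a (r - int i) (Y b (q + int i) u)))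
   - fsum (\<lambda>i. sc (sgn_pow (r + int i) * ((of_int r) gchoose i)) (Y b (q + r - int i) (Y a (int i) u)))"
proof -
  have "fsum (\<lambda>i. sc ((of_int 0) gchoose i) (Y (Y a (r + int i) b) (0 + q - int i) u)) = Y (Y a r b) q u"
    by (subst fsum_single) (auto simp: gbinomial_0_left)
  then show ?thesis using borch[of 0 a r b q u] by simp
qed

lemma phi_Y_word:
  assumes s: "\<sigma> permutes {1..n}"
  shows "okw xs \<Longrightarrow> phi \<sigma> (Y (W xs) m v) = Y (phi \<sigma> (W xs)) m (phi \<sigma> v)"
proof (induction xs arbitrary: m v)
  case Nil
  have "phi \<sigma> vac = vac" using phi_word[OF s, of "[]"] by simp
  then show ?case by (simp add: Yvac vp.linear_0[OF phi_lin])
next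
  case (Cons x xs)
  obtain i k where x: "x = (i,k)" by fastforce
  have i: "i \<in> {1..n}" and ok: "okw xs" using Cons.prems x by auto
  note IH = Cons.IH[OF ok]
  let ?b = "W xs"
  have pa: "phi \<sigma> (W (x # xs)) = Y (om (\<sigma> i)) (k+1) (phi \<sigma> ?b)"
    using x phi_inter[OF s i] by simp
  have lin: "Vector_Spaces.linear sc sc (phi \<sigma>)" by (rule phi_lin)
  have ij: "inj (phi \<sigma>)" using phi_bij[OF s] bij_is_inj by blast
  have "phi \<sigma> (Y (W (x # xs)) m v) = phi \<sigma> (Y (Y (om i) (k+1) ?b) m v)" using x by simp
  also have "\<dots> =
     fsum (\<lambda>t. sc (sgn_pow (int t) * ((of_int (k+1)) gchoose t)) (Y (om (\<sigma> i)) (k+1 - int t) (Y (phi \<sigma> ?b) (m + int t) (phi \<sigma> v))))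
   - fsum (\<lambda>t. sc (sgn_pow ((k+1) + int t) * ((of_int (k+1)) gchoose t)) (Y (phi \<sigma> ?b) (m + (k+1) - int t) (Y (om (\<sigma> i)) (int t) (phi \<sigma> v))))"
    by (subst borch0) (simp add: vp.linear_diff[OF lin] fsum_lin[OF lin ij] vp.linear_scale[OF lin]
        phi_inter[OF s i] IH)
  also have "\<dots> = Y (Y (om (\<sigma> i)) (k+1) (phi \<sigma> ?b)) m (phi \<sigma> v)"
    by (rule borch0[symmetric])
  also have "\<dots> = Y (phi \<sigma> (W (x # xs))) m (phi \<sigma> v)" using pa by simp
  finally show ?case .
qed

lemma phi_Y:
  assumes s: "\<sigma> permutes {1..n}"
  shows "phi \<sigma> (Y a m v) = Y (phi \<sigma> a) m (phi \<sigma> v)"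
proof -
  have "(\<lambda>a. phi \<sigma> (Y a m v)) = (\<lambda>a. Y (phi \<sigma> a) m (phi \<sigma> v))"
  proof (rule eq_on_words)
    show "Vector_Spaces.linear sc sc (\<lambda>a. phi \<sigma> (Y a m v))"
      using Vector_Spaces.linear_compose[OF linY1 phi_lin] by (simp add: o_def)
    show "Vector_Spaces.linear sc sc (\<lambda>a. Y (phi \<sigma> a) m (phi \<sigma> v))"
      using Vector_Spaces.linear_compose[OF phi_lin linY1] by (simp add: o_def)
  qed (rule phi_Y_word[OF s])
  then show ?thesis by meson
qed

lemma om_W: "W [(i, -2)] = om i"
  by (simp add: Ycreate1)

lemma om_pbw: "i \<in> {1..n} \<Longrightarrow> [(i,-2)] \<in> pbw_words n"
  by (simp add: pbw_words_def)

lemma om_inj: "inj_on om {1..n}"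
proof (rule inj_onI)
  fix i j assume "i \<in> {1..n}" "j \<in> {1..n}" "om i = om j"
  then have "W [(i,-2)] = W [(j,-2)]" by (simp add: om_W)
  then show "i = j" using inj_onD[OF pbw_inj _ om_pbw om_pbw] \<open>i \<in> _\<close> \<open>j \<in> _\<close> by fastforce
qed

lemma phi_om: "\<sigma> permutes {1..n} \<Longrightarrow> i \<in> {1..n} \<Longrightarrow> phi \<sigma> (om i) = om (\<sigma> i)"
  using phi_word[of \<sigma> "[(i,-2)]"] by (simp add: Ycreate1)

lemma phi_w: "\<sigma> permutes {1..n} \<Longrightarrow> phi \<sigma> (\<Sum>i=1..n. om i) = (\<Sum>i=1..n. om i)"
proof -
  assume s: "\<sigma> permutes {1..n}"
  have "phi \<sigma> (\<Sum>i=1..n. om i) = (\<Sum>i=1..n. om (\<sigma> i))"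
    unfolding vp.linear_sum[OF phi_lin] using phi_om[OF s] by (intro sum.cong) auto
  also have "\<dots> = (\<Sum>i=1..n. om i)" using sum.permute[OF s, of om] by (simp add: o_def)
  finally show ?thesis .
qed

lemma phi_aut: "\<sigma> permutes {1..n} \<Longrightarrow> VOA_aut sc Y (\<Sum>i=1..n. om i) (phi \<sigma>)"
  unfolding VOA_aut_def using phi_lin phi_bij phi_Y phi_w by blast

lemma phi_inj_perm: "\<sigma> permutes {1..n} \<Longrightarrow> \<tau> permutes {1..n} \<Longrightarrow> phi \<sigma> = phi \<tau> \<Longrightarrow> \<sigma> = \<tau>"
proof
  fix i assume s: "\<sigma> permutes {1..n}" and t: "\<tau> permutes {1..n}" and e: "phi \<sigma> = phi \<tau>"
  show "\<sigma> i = \<tau> i"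
  proof (cases "i \<in> {1..n}")
    case True
    then have "om (\<sigma> i) = om (\<tau> i)" using phi_om[OF s True] phi_om[OF t True] e by simp
    then show ?thesis using inj_onD[OF om_inj] True permutes_in_image[OF s] permutes_in_image[OF t] by blast
  next
    case False
    then show ?thesis using s t by (simp add: permutes_not_in)
  qed
qed

end



definition wt :: "(nat \<times> int) list \<Rightarrow> int" where
  "wt xs = sum_list (map (\<lambda>x. - snd x) xs)"

lemma wt_simps[simp]: "wt [] = 0" "wt ((i,m)#xs) = - m + wt xs"
  by (auto simp: wt_def)

lemma pbw_wt2:
  assumes "xs \<in> pbw_words n" "wt xs = 2"
  shows "\<exists>j\<in>{1..n}. xs = [(j,-2)]"
proof -
  have md: "\<forall>x\<in>set xs. snd x \<le> -2 \<and> fst x \<in> {1..n}" using assms(1) unfolding pbw_words_def by auto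
  have ge: "wt ys \<ge> 2 * int (length ys)" if "\<forall>x\<in>set ys. snd x \<le> -2" for ys
    using that by (induction ys) (auto simp: wt_def)
  have "length xs \<le> 1" using ge[of xs] md assms(2) by auto
  moreover have "xs \<noteq> []" using assms(2) by auto
  ultimately obtain x where x: "xs = [x]" by (cases xs) auto
  obtain j m where "x = (j,m)" by fastforce
  then show ?thesis using x md assms(2) by auto
qed

context VT begin

abbreviation w where "w \<equiv> (\<Sum>i=1..n. om i)"

lemma L0_sum: "Y w 1 v = (\<Sum>j=1..n. Y (om j) 1 v)"
proof -
  have "(\<lambda>a. Y a 1 v) (sum om {1..n}) = (\<Sum>j\<in>{1..n}. (\<lambda>a. Y a 1 v) (om j))"
    by (rule vp.linear_sum[OF linY1])
  then show ?thesis by simp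
qed

lemma L0_comm: "i \<in> {1..n} \<Longrightarrow> j \<in> {1..n} \<Longrightarrow>
   Y (om j) 1 (Y (om i) (m+1) v) = Y (om i) (m+1) (Y (om j) 1 v) + (if j = i then sc (of_int (- m)) (Y (om i) (m+1) v) else 0)"
  using comm[of j i 0 m v] by (auto simp: algebra_simps)

lemma L0_word: "okw xs \<Longrightarrow> Y w 1 (W xs) = sc (of_int (wt xs)) (W xs)"
proof (induction xs)
  case Nil
  then show ?case by (simp add: L0_sum Ycreate)
next
  case (Cons x xs)
  obtain i m where x: "x = (i,m)" by fastforce
  have i: "i \<in> {1..n}" and ok: "okw xs" using Cons.prems x by auto
  have "Y w 1 (W (x # xs)) = (\<Sum>j=1..n. Y (om i) (m+1) (Y (om j) 1 (W xs)) + (if j = i then sc (of_int (- m)) (Y (om i) (m+1) (W xs)) else 0))"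
    unfolding L0_sum x using L0_comm[OF i] by (intro sum.cong) auto
  also have "\<dots> = Y (om i) (m+1) (\<Sum>j=1..n. Y (om j) 1 (W xs)) + sc (of_int (- m)) (Y (om i) (m+1) (W xs))"
    using i by (simp add: sum.distrib vp.linear_sum[OF linY])
  also have "\<dots> = sc (of_int (wt (x # xs))) (W (x # xs))"
    using Cons.IH[OF ok] unfolding L0_sum[symmetric] x by (simp add: Yscale algebra_simps)
  finally show ?case .
qed

lemma om_in_B: "i \<in> {1..n} \<Longrightarrow> om i \<in> W ` pbw_words n"
  using om_pbw om_W by (metis image_eqI)

lemma om_ne0: "i \<in> {1..n} \<Longrightarrow> om i \<noteq> 0"
  using om_in_B pbw_indep vs.dependent_zero by metis

lemma om_coeff0:
  assumes "(\<Sum>j=1..n. sc (x j) (om j)) = 0" "j \<in> {1..n}"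
  shows "x j = 0"
proof -
  let ?u = "\<lambda>v. x (inv_into {1..n} om v)"
  have "(\<Sum>v\<in>om ` {1..n}. sc (?u v) (v)) = (\<Sum>j=1..n. sc (x j) (om j))"
  proof -
    have h: "\<And>j. j \<in> {1..n} \<Longrightarrow> inv_into {1..n} om (om j) = j" by (rule inv_into_f_f[OF om_inj])
    show ?thesis using h by (subst sum.reindex[OF om_inj]) (auto intro!: sum.cong)
  qed
  then have "(\<Sum>v\<in>om ` {1..n}. sc (?u v) (v)) = 0" using assms(1) by simp
  from vs.independentD[OF pbw_indep _ _ this] have "?u (om j) = 0"
    using om_in_B assms(2) by blast
  then show ?thesis using inv_into_f_f[OF om_inj assms(2)] by simp
qed

lemma om_coeff:
  assumes "(\<Sum>j=1..n. sc (x j) (om j)) = (\<Sum>j=1..n. sc (y j) (om j))" "j \<in> {1..n}"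
  shows "x j = y j"
proof -
  have "(\<Sum>j=1..n. sc ((x j - y j)) (om j)) = 0"
    using assms(1) by (simp add: vs.scale_left_diff_distrib sum_subtractf)
  then show ?thesis using om_coeff0[of "\<lambda>j. x j - y j", OF _ assms(2)] by simp
qed

lemma Y_om_om: "j \<in> {1..n} \<Longrightarrow> l \<in> {1..n} \<Longrightarrow> Y (om j) 1 (om l) = (if j = l then sc 2 (om j) else 0)"
  using comm[of j l 0 "-2" vac] by (simp add: Ycreate Ycreate1)

end

locale VTg = VT +
  fixes g assumes aut: "VOA_aut sc Y (\<Sum>i=1..n. om i) g"
begin

lemma g_lin: "Vector_Spaces.linear sc sc g" using aut unfolding VOA_aut_def by blast
lemma g_bij: "bij g" using aut unfolding VOA_aut_def by blast
lemma g_Y: "g (Y a m b) = Y (g a) m (g b)" using aut unfolding VOA_aut_def by blast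
lemma g_w: "g w = w" using aut unfolding VOA_aut_def by blast

lemma g_vac: "g vac = vac"
proof -
  have "Y (g vac) (-1) y = y" for y
  proof -
    obtain x where "y = g x" using g_bij by (metis bij_pointE)
    then show ?thesis using g_Y[of vac "-1" x] by (simp add: Yvac)
  qed
  then show ?thesis using Ycreate1[of "g vac"] by simp
qed

definition a :: "nat \<Rightarrow> nat \<Rightarrow> complex" where
  "a i j = vs.representation (W ` pbw_words n) (g (om i)) (om j)"

lemma g_om_expand:
  assumes i: "i \<in> {1..n}"
  shows "g (om i) = (\<Sum>j=1..n. sc (a i j) (om j))"
proof -
  let ?B = "W ` pbw_words n"
  let ?u = "g (om i)"
  let ?R = "vs.representation ?B ?u"
  let ?F = "{b. ?R b \<noteq> 0}"
  have uspan: "?u \<in> vs.span ?B" using pbw_span by simp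
  have fin: "finite ?F" by (rule vs.finite_representation)
  have FB: "?F \<subseteq> ?B" using vs.representation_ne_zero by blast
  have ue: "(\<Sum>b\<in>?F. sc (?R b) b) = ?u" by (rule vs.sum_nonzero_representation_eq[OF pbw_indep uspan])
  define wb :: "_ \<Rightarrow> complex" where "wb b = of_int (wt (inv_into (pbw_words n) (wapp Y vac om) b))" for b
  have L0b: "Y w 1 b = sc (wb b) b" if bB: "b \<in> ?B" for b
  proof -
    obtain xs where xs: "xs \<in> pbw_words n" "b = W xs" using bB by blast
    then show ?thesis using L0_word[OF pbw_okw[OF xs(1)]] unfolding wb_def
      by (simp add: inv_into_f_f[OF pbw_inj])
  qed
  have "Y w 1 (om i) = sc 2 (om i)"
    using L0_word[of "[(i,-2)]"] i by (simp add: Ycreate1)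
  then have "Y w 1 ?u = sc 2 ?u"
    using g_Y[of w 1 "om i"] g_w vp.linear_scale[OF g_lin] by simp
  moreover have "Y w 1 ?u = (\<Sum>b\<in>?F. sc (?R b * wb b) b)"
  proof -
    have "Y w 1 ?u = (\<Sum>b\<in>?F. Y w 1 (sc (?R b) b))"
      by (subst ue[symmetric]) (rule vp.linear_sum[OF linY])
    also have "\<dots> = (\<Sum>b\<in>?F. sc (?R b * wb b) b)"
      using FB L0b by (intro sum.cong) (auto simp: Yscale)
    finally show ?thesis .
  qed
  moreover have "sc 2 ?u = (\<Sum>b\<in>?F. sc (?R b * 2) b)"
  proof -
    have "sc 2 ?u = sc 2 (\<Sum>b\<in>?F. sc (?R b) b)" using ue by simp
    also have "\<dots> = (\<Sum>b\<in>?F. sc (?R b * 2) b)" by (simp add: vs.scale_sum_right mult.commute)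
    finally show ?thesis .
  qed
  ultimately have "(\<Sum>b\<in>?F. sc (?R b * wb b) b) - (\<Sum>b\<in>?F. sc (?R b * 2) b) = 0"
    by simp
  moreover have "(\<Sum>b\<in>?F. sc (?R b * (wb b - 2)) b) = (\<Sum>b\<in>?F. sc (?R b * wb b) b) - (\<Sum>b\<in>?F. sc (?R b * 2) b)"
    by (simp only: right_diff_distrib vs.scale_left_diff_distrib sum_subtractf)
  ultimately have "(\<Sum>b\<in>?F. sc (?R b * (wb b - 2)) b) = 0"
    by simp
  then have zsum: "(\<Sum>b\<in>?F. sc ((\<lambda>b. ?R b * (wb b - 2)) b) b) = 0" by simp
  have z: "?R b * (wb b - 2) = 0" if bF: "b \<in> ?F" for b
    using vs.independentD[OF pbw_indep fin FB zsum bF] by simp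
  have Fom: "?F \<subseteq> om ` {1..n}"
  proof
    fix b assume bF: "b \<in> ?F"
    then have "wb b = 2" using z[OF bF] bF by simp
    obtain xs where xs: "xs \<in> pbw_words n" "b = W xs" using FB bF by blast
    then have "wt xs = 2" using \<open>wb b = 2\<close> unfolding wb_def by (simp add: inv_into_f_f[OF pbw_inj])
    then obtain j where j: "j \<in> {1..n}" "xs = [(j,-2)]" using pbw_wt2[OF xs(1)] by blast
    then have "b = om j" using xs by (simp add: Ycreate1)
    then show "b \<in> om ` {1..n}" using j by blast
  qed
  have "?u = (\<Sum>b\<in>?F. sc (?R b) b)" using ue by (rule sym)
  also have "\<dots> = (\<Sum>b\<in>om ` {1..n}. sc (?R b) b)"
    using Fom by (intro sum.mono_neutral_left) auto
  also have "\<dots> = (\<Sum>j=1..n. sc (a i j) (om j))"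
    by (subst sum.reindex[OF om_inj]) (simp add: a_def)
  finally show ?thesis .
qed

lemma Y_lin_sum1: "Y (\<Sum>j\<in>S. f j) m v = (\<Sum>j\<in>S. Y (f j) m v)"
proof -
  have "(\<lambda>a. Y a m v) (sum f S) = (\<Sum>j\<in>S. (\<lambda>a. Y a m v) (f j))"
    by (rule vp.linear_sum[OF linY1])
  then show ?thesis by simp
qed

lemma Y_scale1: "Y (sc k x) m v = sc k (Y x m v)"
proof -
  have "(\<lambda>a. Y a m v) (sc k x) = sc k ((\<lambda>a. Y a m v) x)"
    by (rule vp.linear_scale[OF linY1])
  then show ?thesis by simp
qed

lemma inner_sum: "j \<in> {1..n} \<Longrightarrow>
  Y (om j) 1 (\<Sum>l=1..n. sc (x l) (om l)) = sc (x j * 2) (om j)"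
proof -
  assume j: "j \<in> {1..n}"
  have "Y (om j) 1 (\<Sum>l=1..n. sc (x l) (om l)) = (\<Sum>l=1..n. sc (x l) (Y (om j) 1 (om l)))"
    by (simp add: vp.linear_sum[OF linY] Yscale)
  also have "\<dots> = (\<Sum>l=1..n. if j = l then sc (x j * 2) (om j) else 0)"
    using j by (intro sum.cong) (auto simp: Y_om_om)
  also have "\<dots> = sc (x j * 2) (om j)" using j by simp
  finally show ?thesis .
qed

lemma a_prod:
  assumes i: "i \<in> {1..n}" and k: "k \<in> {1..n}" and j: "j \<in> {1..n}"
  shows "a i j * a k j = (if i = k then a i j else 0)"
proof -
  let ?y = "\<lambda>j. if i = k then 2 * a i j else 0"
  have g0: "g 0 = 0" by (rule vp.linear_0[OF g_lin])
  have "Y (g (om i)) 1 (g (om k)) = g (Y (om i) 1 (om k))" by (rule g_Y[symmetric])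
  also have "\<dots> = (\<Sum>j=1..n. sc (?y j) (om j))"
  proof (cases "i = k")
    case True
    then have "g (Y (om i) 1 (om k)) = sc 2 (g (om i))"
      using i by (simp add: Y_om_om vp.linear_scale[OF g_lin])
    also have "\<dots> = (\<Sum>j=1..n. sc (?y j) (om j))"
      using True i k by (simp add: g_om_expand[OF k] vs.scale_sum_right)
    finally show ?thesis .
  next
    case False
    then show ?thesis using i k by (simp add: Y_om_om g0)
  qed
  finally have e1: "Y (g (om i)) 1 (g (om k)) = (\<Sum>j=1..n. sc (?y j) (om j))" .
  have "Y (g (om i)) 1 (g (om k)) = (\<Sum>j=1..n. sc (a i j) (Y (om j) 1 (g (om k))))"
    unfolding g_om_expand[OF i] by (simp add: Y_lin_sum1 Y_scale1)
  also have "\<dots> = (\<Sum>j=1..n. sc (a i j * (a k j * 2)) (om j))"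
  proof (intro sum.cong refl)
    fix j assume j: "j \<in> {1..n}"
    show "sc (a i j) (Y (om j) 1 (g (om k))) = sc (a i j * (a k j * 2)) (om j)"
      unfolding g_om_expand[OF k] inner_sum[OF j] by simp
  qed
  finally have "(\<Sum>j=1..n. sc (a i j * (a k j * 2)) (om j)) = (\<Sum>j=1..n. sc (?y j) (om j))"
    using e1 by simp
  from om_coeff[OF this j] show ?thesis by (auto split: if_splits)
qed

lemma a_sum: "j \<in> {1..n} \<Longrightarrow> (\<Sum>i=1..n. a i j) = 1"
proof -
  assume j: "j \<in> {1..n}"
  have "(\<Sum>j=1..n. sc (\<Sum>i=1..n. a i j) (om j)) = (\<Sum>i=1..n. \<Sum>j=1..n. sc (a i j) (om j))"
    unfolding vs.scale_sum_left by (rule sum.swap)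
  also have "\<dots> = (\<Sum>i=1..n. g (om i))" by (intro sum.cong) (auto simp: g_om_expand)
  also have "\<dots> = g w" by (simp add: vp.linear_sum[OF g_lin])
  also have "\<dots> = (\<Sum>j=1..n. sc 1 (om j))" using g_w by simp
  finally show ?thesis using om_coeff[where x="\<lambda>j. \<Sum>i=1..n. a i j" and y="\<lambda>j. 1", OF _ j] by blast
qed

lemma g_om_ne: "i \<in> {1..n} \<Longrightarrow> g (om i) \<noteq> 0"
  using om_ne0 g_bij vp.linear_0[OF g_lin] by (metis bij_is_inj injD)

lemma a_01: "i \<in> {1..n} \<Longrightarrow> j \<in> {1..n} \<Longrightarrow> a i j \<noteq> 0 \<Longrightarrow> a i j = 1"
proof -
  assume i: "i \<in> {1..n}" and j: "j \<in> {1..n}" and nz: "a i j \<noteq> 0"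
  have "a i j * a i j = a i j" using a_prod[OF i i j] by simp
  then have "a i j * (a i j - 1) = 0" by (simp add: right_diff_distrib)
  then show ?thesis using nz by simp
qed

lemma a_uniq: "i \<in> {1..n} \<Longrightarrow> k \<in> {1..n} \<Longrightarrow> j \<in> {1..n} \<Longrightarrow> a i j \<noteq> 0 \<Longrightarrow> a k j \<noteq> 0 \<Longrightarrow> i = k"
  using a_prod[of i k j] by (cases "i = k") simp_all

lemma a_ex: "j \<in> {1..n} \<Longrightarrow> \<exists>i\<in>{1..n}. a i j \<noteq> 0"
proof (rule ccontr)
  assume j: "j \<in> {1..n}" and h: "\<not> (\<exists>i\<in>{1..n}. a i j \<noteq> 0)"
  have "(\<Sum>i=1..n. a i j) = 0" using h by (intro sum.neutral) blast
  then show False using a_sum[OF j] by simp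
qed

definition tau :: "nat \<Rightarrow> nat" where "tau j = (SOME i. i \<in> {1..n} \<and> a i j \<noteq> 0)"

lemma tau: "j \<in> {1..n} \<Longrightarrow> tau j \<in> {1..n} \<and> a (tau j) j \<noteq> 0"
proof -
  assume j: "j \<in> {1..n}"
  have "\<exists>i. i \<in> {1..n} \<and> a i j \<noteq> 0" using a_ex[OF j] by blast
  then show ?thesis unfolding tau_def by (rule someI_ex)
qed

lemma a_tau: "i \<in> {1..n} \<Longrightarrow> j \<in> {1..n} \<Longrightarrow> a i j = (if i = tau j then 1 else 0)"
proof -
  assume i: "i \<in> {1..n}" and j: "j \<in> {1..n}"
  show ?thesis
  proof (cases "i = tau j")
    case True
    then show ?thesis using tau[OF j] a_01[OF _ j] by simp
  next
    case False
    then have "a i j = 0" using a_uniq[OF i _ j, of "tau j"] tau[OF j] by blast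
    then show ?thesis using False by simp
  qed
qed

lemma g_om_tau: "i \<in> {1..n} \<Longrightarrow> g (om i) = (\<Sum>j=1..n. if i = tau j then om j else 0)"
  unfolding g_om_expand by (intro sum.cong refl) (simp add: a_tau)

lemma tau_surj: "i \<in> {1..n} \<Longrightarrow> \<exists>j\<in>{1..n}. tau j = i"
proof (rule ccontr)
  assume i: "i \<in> {1..n}" and "\<not> (\<exists>j\<in>{1..n}. tau j = i)"
  then have "g (om i) = (\<Sum>j=1..n. (0::'a))" unfolding g_om_tau[OF i] by (intro sum.cong refl) auto
  then show False using g_om_ne[OF i] by simp
qed

lemma tau_bij: "bij_betw tau {1..n} {1..n}"
proof -
  have img: "tau ` {1..n} = {1..n}" using tau tau_surj by blast
  then have "inj_on tau {1..n}" by (intro eq_card_imp_inj_on) auto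
  then show ?thesis using img unfolding bij_betw_def by blast
qed

definition sig :: "nat \<Rightarrow> nat" where "sig i = (if i \<in> {1..n} then inv_into {1..n} tau i else i)"

lemma sig_perm: "sig permutes {1..n}"
proof (rule bij_imp_permutes)
  have "bij_betw (inv_into {1..n} tau) {1..n} {1..n}" using bij_betw_inv_into[OF tau_bij] .
  then show "bij_betw sig {1..n} {1..n}" by (rule bij_betw_cong[THEN iffD1, rotated]) (simp add: sig_def)
qed (auto simp: sig_def)

lemma tau_sig: "i \<in> {1..n} \<Longrightarrow> tau (sig i) = i"
  unfolding sig_def using tau_bij by (simp add: bij_betw_def f_inv_into_f)

lemma sig_tau: "j \<in> {1..n} \<Longrightarrow> sig (tau j) = j"
  unfolding sig_def using tau_bij tau[of j] by (simp add: bij_betw_def inv_into_f_f)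

lemma g_om_sig: "i \<in> {1..n} \<Longrightarrow> g (om i) = om (sig i)"
proof -
  assume i: "i \<in> {1..n}"
  have si: "sig i \<in> {1..n}" using permutes_in_image[OF sig_perm] i by blast
  have "g (om i) = (\<Sum>j=1..n. if sig i = j then om j else 0)"
    unfolding g_om_tau[OF i]
  proof (intro sum.cong refl)
    fix j assume j: "j \<in> {1..n}"
    have "i = tau j \<longleftrightarrow> sig i = j" using tau_sig[OF i] sig_tau[OF j] by auto
    then show "(if i = tau j then om j else 0) = (if sig i = j then om j else 0)" by simp
  qed
  also have "\<dots> = om (sig i)" using si by simp
  finally show ?thesis .
qed

lemma g_word: "okw xs \<Longrightarrow> g (W xs) = W (rl sig xs)"
proof (induction xs)
  case Nil
  then show ?case by (simp add: g_vac)
next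
  case (Cons x xs)
  obtain i m where x: "x = (i,m)" by fastforce
  then show ?case using Cons g_Y g_om_sig by auto
qed

lemma g_phi: "g = phi sig"
  by (rule eq_on_words[OF g_lin phi_lin]) (simp add: g_word phi_word[OF sig_perm])

end

theorem mainTheorem1:
  fixes c :: complex and n :: nat
    and sc :: "complex \<Rightarrow> 'v::ab_group_add \<Rightarrow> 'v"
    and Y :: "'v \<Rightarrow> int \<Rightarrow> 'v \<Rightarrow> 'v" and vac :: 'v and om :: "nat \<Rightarrow> 'v"
  assumes "n \<ge> 1"
    and "is_Vir_tensor_power c n sc Y vac om"
  shows "bij_betw (perm_act n sc Y vac om) {\<sigma>. \<sigma> permutes {1..n}}
           {g. VOA_aut sc Y (\<Sum>i=1..n. om i) g}
         \<and> (\<forall>\<sigma> \<tau>. \<sigma> permutes {1..n} \<longrightarrow> \<tau> permutes {1..n} \<longrightarrow>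
           perm_act n sc Y vac om (\<sigma> \<circ> \<tau>) = perm_act n sc Y vac om \<sigma> \<circ> perm_act n sc Y vac om \<tau>)"
proof -
  interpret VT c n sc Y vac om by unfold_locales (rule assms(2))
  have inj: "inj_on (perm_act n sc Y vac om) {\<sigma>. \<sigma> permutes {1..n}}"
    by (rule inj_onI) (auto simp: perm_act_eq intro: phi_inj_perm)
  have sub: "perm_act n sc Y vac om ` {\<sigma>. \<sigma> permutes {1..n}} \<subseteq> {g. VOA_aut sc Y (\<Sum>i=1..n. om i) g}"
    using phi_aut by (auto simp: perm_act_eq)
  have sup: "{g. VOA_aut sc Y (\<Sum>i=1..n. om i) g} \<subseteq> perm_act n sc Y vac om ` {\<sigma>. \<sigma> permutes {1..n}}"
  proof
    fix g assume "g \<in> {g. VOA_aut sc Y (\<Sum>i=1..n. om i) g}"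
    then interpret VTg c n sc Y vac om g by unfold_locales simp
    have "g = perm_act n sc Y vac om sig" using g_phi perm_act_eq[OF sig_perm] by simp
    then show "g \<in> perm_act n sc Y vac om ` {\<sigma>. \<sigma> permutes {1..n}}" using sig_perm by blast
  qed
  have "bij_betw (perm_act n sc Y vac om) {\<sigma>. \<sigma> permutes {1..n}} {g. VOA_aut sc Y (\<Sum>i=1..n. om i) g}"
    unfolding bij_betw_def using inj sub sup by blast
  moreover have "\<forall>\<sigma> \<tau>. \<sigma> permutes {1..n} \<longrightarrow> \<tau> permutes {1..n} \<longrightarrow>
           perm_act n sc Y vac om (\<sigma> \<circ> \<tau>) = perm_act n sc Y vac om \<sigma> \<circ> perm_act n sc Y vac om \<tau>"
    by (simp add: perm_act_eq permutes_compose phi_comp)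
  ultimately show ?thesis by blast
qed


end
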